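(* Let $m\ge1$, let $Y$ be a set of $m$ indices and $(z_i)_{i\in Y}$ pairwise distinct complex numbers, and let $t\in\mathbb{C}$, $\tau\in\mathbb{Z}$ be such that all denominators below are nonzero. Then \[ \sum_{(J,K)}(-1)^{n_D}\prod_{j\in J}\frac{1}{tz_j\omega^{\tau+n_D+1}-1}\prod_{q=1}^{n_D}\frac{\omega^{q-1}}{tz_{k_q}\omega^{\tau+n_D}-1}\prod_{j\in J}\prod_{k\in K}\frac{z_k-z_j\omega}{z_k-z_j}=0, \] where the sum runs over all ordered pairs $(J,K)$ of disjoint subsets with $J\cup K=Y$, $n_D=\#K$, and $K=\{k_1,\ldots,k_{n_D}\}$.
   Context: $\omega$ is a fixed primitive $N$-th root of unity, $N\ge2$. *)

theory Defs
  imports "HOL-Analysis.Analysis"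
begin

definition primitive_root_of_unity :: "nat \<Rightarrow> complex \<Rightarrow> bool" where
  "primitive_root_of_unity N w \<longleftrightarrow> w ^ N = 1 \<and> (\<forall>k. 0 < k \<and> k < N \<longrightarrow> w ^ k \<noteq> 1)"

end

theory Submission imports Defs "HOL-Computational_Algebra.Polynomial"
begin

fun qb :: "complex \<Rightarrow> nat \<Rightarrow> nat \<Rightarrow> complex" where
  "qb q 0 r = (if r = 0 then 1 else 0)"
| "qb q (Suc m) 0 = 1"
| "qb q (Suc m) (Suc r) = qb q m r + q ^ Suc r * qb q m (Suc r)"

lemma qb_0 [simp]: "qb q m 0 = 1"
  by (cases m) auto

lemma qb_rule: "qb q (Suc m) r = (if r = 0 then 0 else qb q m (r - 1)) + q ^ r * qb q m r"
  by (cases r) auto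

lemma qb_gt: "m < r \<Longrightarrow> qb q m r = 0"
proof (induction m arbitrary: r)
  case 0 then show ?case by simp
next
  case (Suc m) then show ?case by (cases r) auto
qed

lemma qb_diag [simp]: "qb q m m = 1"
  by (induction m) (auto simp: qb_gt)

definition W :: "complex \<Rightarrow> (nat \<Rightarrow> complex) \<Rightarrow> nat set \<Rightarrow> nat set \<Rightarrow> complex" where
  "W w z Y K = (\<Prod>j\<in>Y - K. \<Prod>k\<in>K. (z k - z j * w) / (z k - z j))"

lemma sum_Pow_insert:
  assumes "finite F" "y \<notin> F"
  shows "(\<Sum>K\<in>Pow (insert y F). f K) = (\<Sum>K\<in>Pow F. f K) + (\<Sum>K\<in>Pow F. f (insert y K))"
proof -
  have inj: "inj_on (insert y) (Pow F)" using assms(2) by (auto simp: inj_on_def)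
  have disj: "Pow F \<inter> insert y ` Pow F = {}" using assms(2) by auto
  show ?thesis unfolding Pow_insert
    using assms by (simp add: sum.union_disjoint disj sum.reindex[OF inj])
qed

lemma W_ins_out:
  assumes "finite Y" "i \<notin> Y" "K \<subseteq> Y"
  shows "W w z (insert i Y) K = W w z Y K * (\<Prod>k\<in>K. (z k - z i * w) / (z k - z i))"
proof -
  have "insert i Y - K = insert i (Y - K)" using assms by auto
  then show ?thesis unfolding W_def using assms by (simp add: mult.commute)
qed

lemma W_ins_in:
  assumes "finite Y" "i \<notin> Y" "K \<subseteq> Y"
  shows "W w z (insert i Y) (insert i K) = W w z Y K * (\<Prod>j\<in>Y - K. (z i - z j * w) / (z i - z j))"
proof -
  have s: "insert i Y - insert i K = Y - K" using assms by auto
  have fK: "finite K" using assms finite_subset by blast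
  have iK: "i \<notin> K" using assms by auto
  have "W w z (insert i Y) (insert i K) = (\<Prod>j\<in>Y - K. \<Prod>k\<in>insert i K. (z k - z j * w) / (z k - z j))"
    unfolding W_def s ..
  also have "\<dots> = (\<Prod>j\<in>Y - K. (\<Prod>k\<in>K. (z k - z j * w) / (z k - z j)) * ((z i - z j * w) / (z i - z j)))"
    using fK iK by (intro prod.cong) (simp_all add: mult.commute)
  also have "\<dots> = W w z Y K * (\<Prod>j\<in>Y - K. (z i - z j * w) / (z i - z j))"
    unfolding W_def by (rule prod.distrib)
  finally show ?thesis .
qed

lemma lin_mult_coeff:
  fixes p :: "complex poly"
  assumes "degree p \<le> n"
  shows "coeff ([:a, c:] * p) (Suc n) = c * coeff p n"
    and "degree ([:a, c:] * p) \<le> Suc n"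
proof -
  have "coeff p (Suc n) = 0" using assms by (simp add: coeff_eq_0)
  then show "coeff ([:a, c:] * p) (Suc n) = c * coeff p n" by simp
  show "degree ([:a, c:] * p) \<le> Suc n"
    using assms degree_add_le[of "smult a p" "Suc n" "pCons 0 (smult c p)"] by (simp add: degree_pCons_le)
qed

lemma lin_prod_coeff:
  fixes q :: "complex poly"
  assumes "finite A" "degree q \<le> n"
  shows "coeff ((\<Prod>k\<in>A. [:a k, c k:]) * q) (card A + n) = (\<Prod>k\<in>A. c k) * coeff q n
       \<and> degree ((\<Prod>k\<in>A. [:a k, c k:]) * q) \<le> card A + n"
  using assms(1)
proof (induction A rule: finite_induct)
  case empty then show ?case using assms(2) by simp
next
  case (insert x F)
  have e: "(\<Prod>k\<in>insert x F. [:a k, c k:]) * q = [:a x, c x:] * ((\<Prod>k\<in>F. [:a k, c k:]) * q)"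
    using insert by (simp add: mult.assoc del: mult_pCons_left)
  have h: "coeff ([:a x, c x:] * ((\<Prod>k\<in>F. [:a k, c k:]) * q)) (Suc (card F + n)) = c x * coeff ((\<Prod>k\<in>F. [:a k, c k:]) * q) (card F + n)"
       "degree ([:a x, c x:] * ((\<Prod>k\<in>F. [:a k, c k:]) * q)) \<le> Suc (card F + n)"
    using insert lin_mult_coeff[of "(\<Prod>k\<in>F. [:a k, c k:]) * q" "card F + n" "a x" "c x"] by blast+
  show ?case unfolding e using insert h by (simp del: mult_pCons_left)
qed

lemma poly_zero_roots:
  fixes p :: "complex poly"
  assumes "finite S" "\<And>x. x \<in> S \<Longrightarrow> poly p x = 0" "degree p < card S"
  shows "p = 0"
proof (rule ccontr)
  assume "p \<noteq> 0"
  then have "card S \<le> card {x. poly p x = 0}"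
    using assms by (intro card_mono poly_roots_finite) auto
  also have "\<dots> \<le> degree p" using card_poly_roots_bound[OF \<open>p \<noteq> 0\<close>] .
  finally show False using assms(3) by simp
qed

lemma poly_zero_roots_coeff:
  fixes p :: "complex poly"
  assumes "finite S" "\<And>x. x \<in> S \<Longrightarrow> poly p x = 0" "degree p \<le> card S" "coeff p (card S) = 0"
  shows "p = 0"
proof (cases "degree p = card S")
  case True
  then have "lead_coeff p = 0" using assms by simp
  then show ?thesis by simp
next
  case False
  then show ?thesis using poly_zero_roots[OF assms(1,2)] assms(3) by simp
qed

lemma prod_mult_cong:
  assumes "\<And>x. x \<in> A \<Longrightarrow> f x * g x = h x"
  shows "prod f A * prod g A = prod h A"
  using assms by (simp add: prod.distrib[symmetric])

lemma card_ins_Pow: "finite F \<Longrightarrow> K \<in> Pow F \<Longrightarrow> y \<notin> F \<Longrightarrow> card (insert y K) = Suc (card K)"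
  by (metis PowD card_insert_disjoint finite_subset subsetD)

lemma classical:
  assumes "finite Y" "inj_on z Y"
  shows "(\<Sum>K\<in>Pow Y. if card K = r then W w z Y K else 0) = qb w (card Y) r"
  using assms
proof (induction Y arbitrary: r rule: finite_induct)
  case empty
  then show ?case by (simp add: W_def)
next
  case (insert y F)
  have injF: "inj_on z F" using insert.prems by (simp add: inj_on_insert)
  have IH: "\<And>r. (\<Sum>K\<in>Pow F. if card K = r then W w z F K else 0) = qb w (card F) r"
    using insert.IH injF by blast
  have zyF: "z y \<notin> z ` F" using insert.prems insert.hyps by (simp add: inj_on_insert)
  define P1 where "P1 K = (\<Prod>k\<in>K. [:- z k, w:]) * ((\<Prod>j\<in>F - K. [:- z j, 1:]) * 1)" for K
  define P2 where "P2 K = (\<Prod>k\<in>K. [:- z k, 1:]) * ((\<Prod>j\<in>F - K. [:- (z j * w), 1:]) * 1)" for K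
  define Q where "Q = (\<Sum>K\<in>Pow F. if card K = r then smult (W w z F K) (P1 K) else 0)
     + (\<Sum>K\<in>Pow F. if Suc (card K) = r then smult (W w z F K) (P2 K) else 0)
     - smult (qb w (Suc (card F)) r) ((\<Prod>j\<in>F. [:- z j, 1:]) * 1)"
  have P1c: "coeff (P1 K) (card F) = w ^ card K \<and> degree (P1 K) \<le> card F" if "K \<in> Pow F" for K
  proof -
    have fK: "finite K" "finite (F - K)" using that insert.hyps finite_subset by auto
    have cF: "card K + card (F - K) = card F"
      using that insert.hyps by (metis PowD card_Diff_subset card_mono le_add_diff_inverse finite_subset)
    have i: "coeff ((\<Prod>j\<in>F - K. [:- z j, 1:]) * 1) (card (F - K) + 0) = 1 \<and> degree ((\<Prod>j\<in>F - K. [:- z j, 1:]) * 1) \<le> card (F - K) + 0"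
      using lin_prod_coeff[OF fK(2), of 1 0 "\<lambda>j. - z j" "\<lambda>j. 1"] by simp
    show ?thesis using lin_prod_coeff[OF fK(1), of "(\<Prod>j\<in>F - K. [:- z j, 1:]) * 1" "card (F - K)" "\<lambda>k. - z k" "\<lambda>k. w"] i
      unfolding P1_def cF by simp
  qed
  have P2c: "coeff (P2 K) (card F) = 1 \<and> degree (P2 K) \<le> card F" if "K \<in> Pow F" for K
  proof -
    have fK: "finite K" "finite (F - K)" using that insert.hyps finite_subset by auto
    have cF: "card K + card (F - K) = card F"
      using that insert.hyps by (metis PowD card_Diff_subset card_mono le_add_diff_inverse finite_subset)
    have i: "coeff ((\<Prod>j\<in>F - K. [:- (z j * w), 1:]) * 1) (card (F - K) + 0) = 1 \<and> degree ((\<Prod>j\<in>F - K. [:- (z j * w), 1:]) * 1) \<le> card (F - K) + 0"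
      using lin_prod_coeff[OF fK(2), of 1 0 "\<lambda>j. - (z j * w)" "\<lambda>j. 1"] by simp
    show ?thesis using lin_prod_coeff[OF fK(1), of "(\<Prod>j\<in>F - K. [:- (z j * w), 1:]) * 1" "card (F - K)" "\<lambda>k. - z k" "\<lambda>k. 1"] i
      unfolding P2_def cF by simp
  qed
  have P0c: "coeff ((\<Prod>j\<in>F. [:- z j, 1:]) * 1) (card F) = 1 \<and> degree ((\<Prod>j\<in>F. [:- z j, 1:]) * 1) \<le> card F"
    using lin_prod_coeff[OF insert.hyps(1), of 1 0 "\<lambda>j. - z j" "\<lambda>j. 1"] by simp
  have degQ: "degree Q \<le> card F"
    unfolding Q_def
    by (intro degree_diff_le degree_add_le degree_sum_le order.trans[OF degree_smult_le])
       (use P1c P2c P0c insert.hyps in auto)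
  have coeffQ: "coeff Q (card F) = 0"
  proof -
    have a: "(\<Sum>K\<in>Pow F. if card K = r then W w z F K * w ^ card K else 0) = w ^ r * qb w (card F) r"
      by (simp add: IH[symmetric] sum_distrib_left if_distrib cong: if_cong) (rule sum.cong, auto)
    have b: "(\<Sum>K\<in>Pow F. if Suc (card K) = r then W w z F K else 0) = (if r = 0 then 0 else qb w (card F) (r - 1))"
    proof (cases r)
      case 0 then show ?thesis by simp
    next
      case (Suc r') then show ?thesis using IH[of r'] by simp
    qed
    have "coeff Q (card F) = (\<Sum>K\<in>Pow F. if card K = r then W w z F K * w ^ card K else 0)
       + (\<Sum>K\<in>Pow F. if Suc (card K) = r then W w z F K else 0) - qb w (Suc (card F)) r"
      unfolding Q_def using P1c P2c P0c
      by (simp add: coeff_sum if_distrib[of "\<lambda>p. coeff p _"] cong: if_cong)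
    then show ?thesis unfolding a b qb_rule by simp
  qed
  have rootQ: "poly Q (z i) = 0" if iF: "i \<in> F" for i
  proof -
    define G where "G = F - {i}"
    have FG: "F = insert i G" "i \<notin> G" "finite G" using iF insert.hyps unfolding G_def by auto
    have ne: "z i \<noteq> z j" if "j \<in> G" for j
      using injF iF that unfolding G_def by (auto dest: inj_onD)
    have s1: "(\<Sum>K\<in>Pow F. if card K = r then W w z F K * poly (P1 K) (z i) else 0)
       = (\<Sum>K\<in>Pow G. if card (insert i K) = r then W w z F (insert i K) * poly (P1 (insert i K)) (z i) else 0)"
    proof -
      have "poly (P1 K) (z i) = 0" if "K \<in> Pow G" for K
      proof -
        have "i \<in> F - K" "finite (F - K)" using that FG by auto
        then show ?thesis unfolding P1_def by (simp add: poly_prod prod_zero_iff) (intro disjI2 bexI[of _ i], auto)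
      qed
      then show ?thesis unfolding FG(1) by (simp add: sum_Pow_insert[OF FG(3,2)] cong: if_cong)
    qed
    have s2: "(\<Sum>K\<in>Pow F. if Suc (card K) = r then W w z F K * poly (P2 K) (z i) else 0)
       = (\<Sum>K\<in>Pow G. if Suc (card K) = r then W w z F K * poly (P2 K) (z i) else 0)"
    proof -
      have "poly (P2 (insert i K)) (z i) = 0" if "K \<in> Pow G" for K
      proof -
        have "finite (insert i K)" using that FG finite_subset by auto
        then show ?thesis unfolding P2_def by (simp add: poly_prod prod_zero_iff)
      qed
      then show ?thesis unfolding FG(1) by (simp add: sum_Pow_insert[OF FG(3,2)] cong: if_cong)
    qed
    have tm: "W w z F (insert i K) * poly (P1 (insert i K)) (z i) + W w z F K * poly (P2 K) (z i) = 0"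
      if KG: "K \<in> Pow G" for K
    proof -
      have KG': "K \<subseteq> G" "finite K" "i \<notin> K" using KG FG finite_subset by auto
      have d1: "F - insert i K = G - K" "F - K = insert i (G - K)" "i \<notin> G - K" "finite (G - K)"
        using FG KG' by auto
      have W1: "W w z F (insert i K) = W w z G K * (\<Prod>j\<in>G - K. (z i - z j * w) / (z i - z j))"
        unfolding FG(1) using W_ins_in[OF FG(3,2) KG'(1)] .
      have W2: "W w z F K = W w z G K * (\<Prod>k\<in>K. (z k - z i * w) / (z k - z i))"
        unfolding FG(1) using W_ins_out[OF FG(3,2) KG'(1)] .
      have p1: "poly (P1 (insert i K)) (z i) = (- z i + z i * w) * (\<Prod>k\<in>K. - z k + z i * w) * (\<Prod>j\<in>G - K. - z j + z i)"
        unfolding P1_def d1(1) using KG' by (simp add: poly_prod algebra_simps)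
      have p2: "poly (P2 K) (z i) = (\<Prod>k\<in>K. - z k + z i) * ((- (z i * w) + z i) * (\<Prod>j\<in>G - K. - (z j * w) + z i))"
        unfolding P2_def d1(2) using d1(3,4) by (simp add: poly_prod algebra_simps)
      have c1: "(\<Prod>j\<in>G - K. (z i - z j * w) / (z i - z j)) * (\<Prod>j\<in>G - K. - z j + z i) = (\<Prod>j\<in>G - K. - (z j * w) + z i)"
        by (rule prod_mult_cong) (use ne in \<open>auto simp: field_simps\<close>)
      have ne2: "z k \<noteq> z i" if "k \<in> K" for k using ne[of k] that KG' by auto
      have c2: "(\<Prod>k\<in>K. (z k - z i * w) / (z k - z i)) * (\<Prod>k\<in>K. - z k + z i) = (\<Prod>k\<in>K. - z k + z i * w)"
        by (rule prod_mult_cong) (use ne2 in \<open>auto simp: field_simps\<close>)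
      have "W w z F (insert i K) * poly (P1 (insert i K)) (z i)
          = W w z G K * (- z i + z i * w) * (\<Prod>k\<in>K. - z k + z i * w) * ((\<Prod>j\<in>G - K. (z i - z j * w) / (z i - z j)) * (\<Prod>j\<in>G - K. - z j + z i))"
        unfolding W1 p1 by (simp add: ac_simps)
      also have "\<dots> = W w z G K * (- z i + z i * w) * (\<Prod>k\<in>K. - z k + z i * w) * (\<Prod>j\<in>G - K. - (z j * w) + z i)"
        unfolding c1 ..
      finally have e1: "W w z F (insert i K) * poly (P1 (insert i K)) (z i) = W w z G K * (- z i + z i * w) * (\<Prod>k\<in>K. - z k + z i * w) * (\<Prod>j\<in>G - K. - (z j * w) + z i)" .
      have "W w z F K * poly (P2 K) (z i)
          = W w z G K * ((\<Prod>k\<in>K. (z k - z i * w) / (z k - z i)) * (\<Prod>k\<in>K. - z k + z i)) * ((- (z i * w) + z i) * (\<Prod>j\<in>G - K. - (z j * w) + z i))"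
        unfolding W2 p2 by (simp add: ac_simps)
      also have "\<dots> = W w z G K * (\<Prod>k\<in>K. - z k + z i * w) * ((- (z i * w) + z i) * (\<Prod>j\<in>G - K. - (z j * w) + z i))"
        unfolding c2 ..
      finally have e2: "W w z F K * poly (P2 K) (z i) = W w z G K * (\<Prod>k\<in>K. - z k + z i * w) * ((- (z i * w) + z i) * (\<Prod>j\<in>G - K. - (z j * w) + z i))" .
      show ?thesis unfolding e1 e2 by (simp add: algebra_simps)
    qed
    have "poly Q (z i) = (\<Sum>K\<in>Pow F. if card K = r then W w z F K * poly (P1 K) (z i) else 0)
       + (\<Sum>K\<in>Pow F. if Suc (card K) = r then W w z F K * poly (P2 K) (z i) else 0)
       - qb w (Suc (card F)) r * (\<Prod>j\<in>F. - z j + z i)"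
      unfolding Q_def by (simp add: poly_sum poly_prod if_distrib[of "\<lambda>p. poly p _"] cong: if_cong)
    also have "(\<Prod>j\<in>F. - z j + z i) = 0"
      using iF insert.hyps by (simp add: prod_zero_iff) (rule bexI[of _ i], auto)
    also have "(\<Sum>K\<in>Pow F. if card K = r then W w z F K * poly (P1 K) (z i) else 0)
       + (\<Sum>K\<in>Pow F. if Suc (card K) = r then W w z F K * poly (P2 K) (z i) else 0) = 0"
      unfolding s1 s2 sum.distrib[symmetric]
      by (rule sum.neutral) (use tm card_ins_Pow[OF FG(3) _ FG(2)] in auto)
    finally show ?thesis by simp
  qed
  have Q0: "Q = 0"
  proof (rule poly_zero_roots_coeff[of "z ` F"])
    show "finite (z ` F)" using insert.hyps by simp
    show "poly Q x = 0" if "x \<in> z ` F" for x using that rootQ by auto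
    show "degree Q \<le> card (z ` F)" using degQ card_image[OF injF] by simp
    show "coeff Q (card (z ` F)) = 0" using coeffQ card_image[OF injF] by simp
  qed
  define D where "D = (\<Prod>j\<in>F. - z j + z y)"
  have D0: "D \<noteq> 0" unfolding D_def using insert.hyps zyF by (auto simp: prod_zero_iff)
  have nek: "z k \<noteq> z y" if "k \<in> F" for k using zyF that by (metis image_eqI)
  have nek2: "z y - z k \<noteq> 0" if "k \<in> F" for k using nek[OF that] by simp
  have t1: "W w z (insert y F) K * D = W w z F K * poly (P1 K) (z y)" if "K \<in> Pow F" for K
  proof -
    have KF: "K \<subseteq> F" "finite K" using that insert.hyps finite_subset by auto
    have Dsplit: "D = (\<Prod>j\<in>F - K. - z j + z y) * (\<Prod>k\<in>K. - z k + z y)"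
      unfolding D_def using prod.subset_diff[OF KF(1) insert.hyps(1)] .
    have c: "(\<Prod>k\<in>K. (z k - z y * w) / (z k - z y)) * (\<Prod>k\<in>K. - z k + z y) = (\<Prod>k\<in>K. - z k + z y * w)"
      by (rule prod_mult_cong) (use nek KF in \<open>auto simp: field_simps\<close>)
    have "W w z (insert y F) K * D = W w z F K * ((\<Prod>k\<in>K. (z k - z y * w) / (z k - z y)) * (\<Prod>k\<in>K. - z k + z y)) * (\<Prod>j\<in>F - K. - z j + z y)"
      unfolding W_ins_out[OF insert.hyps(1,2) KF(1)] Dsplit by (simp add: ac_simps)
    also have "\<dots> = W w z F K * poly (P1 K) (z y)" unfolding c P1_def by (simp add: poly_prod)
    finally show ?thesis .
  qed
  have t2: "W w z (insert y F) (insert y K) * D = W w z F K * poly (P2 K) (z y)" if "K \<in> Pow F" for K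
  proof -
    have KF: "K \<subseteq> F" "finite K" using that insert.hyps finite_subset by auto
    have Dsplit: "D = (\<Prod>j\<in>F - K. - z j + z y) * (\<Prod>k\<in>K. - z k + z y)"
      unfolding D_def using prod.subset_diff[OF KF(1) insert.hyps(1)] .
    have c: "(\<Prod>j\<in>F - K. (z y - z j * w) / (z y - z j)) * (\<Prod>j\<in>F - K. - z j + z y) = (\<Prod>j\<in>F - K. - (z j * w) + z y)"
      by (rule prod_mult_cong) (use nek2 KF in \<open>auto simp: field_simps\<close>)
    have "W w z (insert y F) (insert y K) * D = W w z F K * ((\<Prod>j\<in>F - K. (z y - z j * w) / (z y - z j)) * (\<Prod>j\<in>F - K. - z j + z y)) * (\<Prod>k\<in>K. - z k + z y)"
      unfolding W_ins_in[OF insert.hyps(1,2) KF(1)] Dsplit by (simp add: ac_simps)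
    also have "\<dots> = W w z F K * poly (P2 K) (z y)" unfolding c P2_def by (simp add: poly_prod ac_simps)
    finally show ?thesis .
  qed
  have "poly Q (z y) = 0" using Q0 by simp
  then have eq: "(\<Sum>K\<in>Pow F. if card K = r then W w z F K * poly (P1 K) (z y) else 0)
       + (\<Sum>K\<in>Pow F. if Suc (card K) = r then W w z F K * poly (P2 K) (z y) else 0)
       = qb w (Suc (card F)) r * D"
    unfolding Q_def D_def by (simp add: poly_sum poly_prod if_distrib[of "\<lambda>p. poly p _"] cong: if_cong)
  have "(\<Sum>K\<in>Pow (insert y F). if card K = r then W w z (insert y F) K else 0) * D
     = (\<Sum>K\<in>Pow F. if card K = r then W w z (insert y F) K * D else 0)
       + (\<Sum>K\<in>Pow F. if Suc (card K) = r then W w z (insert y F) (insert y K) * D else 0)"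
    unfolding sum_Pow_insert[OF insert.hyps(1,2)] distrib_right sum_distrib_right
    by (intro arg_cong2[where f="(+)"] sum.cong) (auto simp: card_ins_Pow[OF insert.hyps(1) _ insert.hyps(2)])
  also have "\<dots> = qb w (Suc (card F)) r * D"
    unfolding eq[symmetric] by (intro arg_cong2[where f="(+)"] sum.cong) (auto simp: t1 t2)
  finally show ?case using D0 insert.hyps by simp
qed

lemma degree_lin1: "degree [:- 1, c:] \<le> (if c = 0 then 0 else 1)"
  by auto

lemma lemmaE_poly:
  fixes n m :: nat
  assumes fin: "finite Y" and inj: "inj_on z Y" and cY: "card Y = Suc m" and w0: "w \<noteq> 0"
  defines "P \<equiv> \<lambda>K. (\<Prod>k\<in>K. [:- 1, w * z k:]) * (\<Prod>j\<in>Y - K. [:- 1, z j:])"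
  defines "\<alpha> \<equiv> (if n = 0 then 0 else qb w m (n - 1))"
  defines "\<beta> \<equiv> w ^ n * qb w m n"
  defines "R \<equiv> (\<Sum>K\<in>Pow Y. if card K = n then smult (W w z Y K) (P K) else 0)
      - smult \<alpha> (\<Prod>i\<in>Y. [:- 1, w * z i:]) - smult \<beta> (\<Prod>i\<in>Y. [:- 1, z i:])"
  shows "R = 0"
proof -
  define d where "d i = (if z i = 0 then 0 else 1::nat)" for i
  define Y0 where "Y0 = {i\<in>Y. z i \<noteq> 0}"
  have sd: "sum d Y = card Y0"
  proof -
    have "sum d Y = (\<Sum>i\<in>Y. if z i \<noteq> 0 then 1 else 0)" by (intro sum.cong) (auto simp: d_def)
    also have "\<dots> = (\<Sum>i\<in>Y0. 1)" unfolding Y0_def using sum.inter_filter[OF fin, of "\<lambda>_. 1::nat"] by simp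
    finally show ?thesis by simp
  qed
  have dg1: "degree (\<Prod>k\<in>A. [:- 1, w * z k:]) \<le> sum d A" if "finite A" for A
    using degree_prod_sum_le[OF that, of "\<lambda>k. [:- 1, w * z k:]"] w0
    by (smt (verit) comp_apply d_def degree_lin1 order_trans sum_mono mult_eq_0_iff)
  have dg2: "degree (\<Prod>k\<in>A. [:- 1, z k:]) \<le> sum d A" if "finite A" for A
    using degree_prod_sum_le[OF that, of "\<lambda>k. [:- 1, z k:]"]
    by (smt (verit) comp_apply d_def degree_lin1 order_trans sum_mono)
  have dP: "degree (P K) \<le> card Y0" if "K \<in> Pow Y" for K
  proof -
    have KY: "K \<subseteq> Y" "finite K" "finite (Y - K)" using that fin finite_subset by auto
    have "degree (P K) \<le> sum d K + sum d (Y - K)"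
      unfolding P_def using degree_mult_le dg1[OF KY(2)] dg2[OF KY(3)] by (meson add_mono order_trans)
    also have "\<dots> = sum d Y" using sum.subset_diff[OF KY(1) fin, of d] by simp
    finally show ?thesis using sd by simp
  qed
  have degR: "degree R \<le> card Y0"
    unfolding R_def
    by (intro degree_diff_le degree_sum_le order.trans[OF degree_smult_le])
       (use dP fin dg1[OF fin] dg2[OF fin] sd in auto)
  have root0: "poly R 0 = 0"
  proof -
    have pP: "poly (P K) 0 = (-1) ^ Suc m" if "K \<in> Pow Y" for K
    proof -
      have KY: "K \<subseteq> Y" "finite K" using that fin finite_subset by auto
      have "poly (P K) 0 = (-1) ^ (card K + card (Y - K))"
        unfolding P_def using KY fin by (simp add: poly_prod power_add)
      also have "card K + card (Y - K) = Suc m"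
        using KY fin cY by (metis card_Diff_subset card_mono le_add_diff_inverse)
      finally show ?thesis .
    qed
    have "poly R 0 = (\<Sum>K\<in>Pow Y. if card K = n then W w z Y K * (-1) ^ Suc m else 0) - \<alpha> * (-1) ^ Suc m - \<beta> * (-1) ^ Suc m"
      unfolding R_def using fin cY by (simp add: poly_sum poly_prod if_distrib[of "\<lambda>p. poly p _"] pP cong: if_cong)
    also have "(\<Sum>K\<in>Pow Y. if card K = n then W w z Y K * (-1) ^ Suc m else 0) = qb w (Suc m) n * (-1) ^ Suc m"
    proof -
      have "(\<Sum>K\<in>Pow Y. if card K = n then W w z Y K * (-1) ^ Suc m else 0) = (\<Sum>K\<in>Pow Y. if card K = n then W w z Y K else 0) * (-1) ^ Suc m"
        by (subst sum_distrib_right) (rule sum.cong, auto)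
      then show ?thesis using classical[OF fin inj, of n w] cY by simp
    qed
    finally show ?thesis unfolding qb_rule \<alpha>_def \<beta>_def by (simp add: algebra_simps)
  qed
  have rooti: "poly R (1 / z i) = 0" if iY: "i \<in> Y0" for i
  proof -
    have iY': "i \<in> Y" "z i \<noteq> 0" using iY unfolding Y0_def by auto
    define G where "G = Y - {i}"
    have YG: "Y = insert i G" "i \<notin> G" "finite G" "card G = m" using iY' fin cY unfolding G_def by auto
    have ne: "z i - z j \<noteq> 0" if "j \<in> G" for j
      using inj iY' that unfolding G_def by (auto dest: inj_onD)
    define x where "x = 1 / z i"
    have xz: "x * z i = 1" unfolding x_def using iY' by simp
    define PG where "PG = (\<Prod>l\<in>G. - 1 + x * (w * z l))"
    have out: "poly (P K) x = 0" if "K \<in> Pow G" for K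
    proof -
      have "i \<in> Y - K" "finite (Y - K)" using that YG iY' fin by auto
      then show ?thesis unfolding P_def using xz by (simp add: poly_prod prod_zero_iff) (intro disjI2 bexI[of _ i], auto)
    qed
    have inn: "W w z Y (insert i K) * poly (P (insert i K)) x = W w z G K * (-1 + w) * PG" if "K \<in> Pow G" for K
    proof -
      have KG: "K \<subseteq> G" "finite K" "i \<notin> K" using that YG finite_subset by auto
      have d1: "Y - insert i K = G - K" using YG by auto
      have c: "(\<Prod>j\<in>G - K. (z i - z j * w) / (z i - z j)) * (\<Prod>j\<in>G - K. - 1 + x * z j) = (\<Prod>j\<in>G - K. - 1 + x * (w * z j))"
        by (rule prod_mult_cong) (use ne iY' in \<open>auto simp: field_simps x_def\<close>)
      have sp: "PG = (\<Prod>j\<in>G - K. - 1 + x * (w * z j)) * (\<Prod>k\<in>K. - 1 + x * (w * z k))"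
        unfolding PG_def using prod.subset_diff[OF KG(1) YG(3)] .
      have "W w z Y (insert i K) * poly (P (insert i K)) x
          = W w z G K * ((\<Prod>j\<in>G - K. (z i - z j * w) / (z i - z j)) * (\<Prod>j\<in>G - K. - 1 + x * z j)) * (- 1 + x * (w * z i)) * (\<Prod>k\<in>K. - 1 + x * (w * z k))"
        unfolding YG(1) W_ins_in[OF YG(3,2) KG(1)] P_def d1[unfolded YG(1)]
        using KG by (simp add: poly_prod algebra_simps)
      also have "\<dots> = W w z G K * (-1 + w) * PG"
        unfolding c sp using xz by (simp add: algebra_simps)
      finally show ?thesis .
    qed
    have s: "(\<Sum>K\<in>Pow Y. if card K = n then W w z Y K * poly (P K) x else 0)
        = (\<Sum>K\<in>Pow G. if Suc (card K) = n then W w z G K else 0) * (-1 + w) * PG"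
    proof -
      have "(\<Sum>K\<in>Pow Y. if card K = n then W w z Y K * poly (P K) x else 0)
         = (\<Sum>K\<in>Pow G. if card K = n then W w z Y K * poly (P K) x else 0)
         + (\<Sum>K\<in>Pow G. if card (insert i K) = n then W w z Y (insert i K) * poly (P (insert i K)) x else 0)"
        using sum_Pow_insert[OF YG(3,2), of "\<lambda>K. if card K = n then W w z Y K * poly (P K) x else 0"]
        unfolding YG(1)[symmetric] .
      also have "\<dots> = (\<Sum>K\<in>Pow G. if Suc (card K) = n then W w z G K * (-1 + w) * PG else 0)"
      proof -
        have "(\<Sum>K\<in>Pow G. if card K = n then W w z Y K * poly (P K) x else 0) = 0"
          by (rule sum.neutral) (auto simp: out)
        moreover have "(\<Sum>K\<in>Pow G. if card (insert i K) = n then W w z Y (insert i K) * poly (P (insert i K)) x else 0)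
           = (\<Sum>K\<in>Pow G. if Suc (card K) = n then W w z G K * (-1 + w) * PG else 0)"
          by (rule sum.cong) (auto simp: inn card_ins_Pow[OF YG(3) _ YG(2)])
        ultimately show ?thesis by simp
      qed
      also have "\<dots> = (\<Sum>K\<in>Pow G. if Suc (card K) = n then W w z G K else 0) * (-1 + w) * PG"
        by (subst mult.assoc, subst sum_distrib_right) (rule sum.cong, auto)
      finally show ?thesis .
    qed
    have s2: "(\<Sum>K\<in>Pow G. if Suc (card K) = n then W w z G K else 0) = \<alpha>"
    proof (cases n)
      case 0 then show ?thesis unfolding \<alpha>_def by simp
    next
      case (Suc n') then show ?thesis unfolding \<alpha>_def using classical[OF YG(3), of z n' w] inj YG
        by (simp add: inj_on_subset)
    qed
    have pa: "(\<Prod>l\<in>Y. - 1 + x * (w * z l)) = (-1 + w) * PG"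
      unfolding YG(1) PG_def using YG xz by (simp add: algebra_simps)
    have pb: "(\<Prod>l\<in>Y. - 1 + x * z l) = 0"
      using iY' fin xz by (simp add: prod_zero_iff) (intro bexI[of _ i], auto)
    have "poly R x = (\<Sum>K\<in>Pow Y. if card K = n then W w z Y K * poly (P K) x else 0) - \<alpha> * (\<Prod>l\<in>Y. - 1 + x * (w * z l)) - \<beta> * (\<Prod>l\<in>Y. - 1 + x * z l)"
      unfolding R_def by (simp add: poly_sum poly_prod if_distrib[of "\<lambda>p. poly p _"] cong: if_cong)
    also have "\<dots> = 0" unfolding s s2 pa pb by simp
    finally show ?thesis unfolding x_def .
  qed
  define S where "S = insert 0 ((\<lambda>i. 1 / z i) ` Y0)"
  have injY0: "inj_on (\<lambda>i. 1 / z i) Y0"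
    using inj unfolding Y0_def inj_on_def by auto
  have cS: "card S = Suc (card Y0)"
    unfolding S_def using fin unfolding Y0_def
    by (subst card_insert_disjoint) (auto simp: card_image injY0[unfolded Y0_def])
  show "R = 0"
  proof (rule poly_zero_roots[of S])
    show "finite S" unfolding S_def Y0_def using fin by simp
    show "poly R x = 0" if "x \<in> S" for x using that root0 rooti unfolding S_def by auto
    show "degree R < card S" using degR cS by simp
  qed
qed

lemma prod_sorted:
  assumes "finite K"
  shows "(\<Prod>q\<in>{1..card K}. g (sorted_list_of_set K ! (q - 1))) = (\<Prod>k\<in>K. g k)"
proof -
  define ks where "ks = sorted_list_of_set K"
  have ks: "distinct ks" "set ks = K" "length ks = card K" using assms unfolding ks_def by auto
  have "(\<Prod>k\<in>K. g k) = prod_list (map g ks)"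
    using prod.distinct_set_conv_list[OF ks(1), of g] ks(2) by simp
  also have "\<dots> = (\<Prod>i\<in>{0..<card K}. g (ks ! i))"
    by (simp add: prod.list_conv_set_nth ks(3))
  also have "\<dots> = (\<Prod>q\<in>{1..card K}. g (ks ! (q - 1)))"
    by (simp add: prod.atLeast1_atMost_eq atLeast0LessThan)
  finally show ?thesis unfolding ks_def by simp
qed

lemma lemmaE_div:
  fixes n m :: nat
  assumes fin: "finite Y" and inj: "inj_on z Y" and cY: "card Y = Suc m" and w0: "w \<noteq> 0"
    and A: "\<And>i. i \<in> Y \<Longrightarrow> b * w * z i - 1 \<noteq> 0"
    and B: "\<And>i. i \<in> Y \<Longrightarrow> b * z i - 1 \<noteq> 0"
  shows "(\<Sum>K\<in>Pow Y. if card K = n then (\<Prod>j\<in>Y - K. 1 / (b * w * z j - 1)) * (\<Prod>k\<in>K. 1 / (b * z k - 1)) * W w z Y K else 0)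
    = (if n = 0 then 0 else qb w m (n - 1)) / (\<Prod>i\<in>Y. b * z i - 1) + w ^ n * qb w m n / (\<Prod>i\<in>Y. b * w * z i - 1)"
proof -
  define \<alpha> where "\<alpha> = (if n = 0 then 0 else qb w m (n - 1))"
  define \<beta> where "\<beta> = w ^ n * qb w m n"
  define PA where "PA = (\<Prod>i\<in>Y. b * w * z i - 1)"
  define PB where "PB = (\<Prod>i\<in>Y. b * z i - 1)"
  have PA0: "PA \<noteq> 0" unfolding PA_def using A fin by auto
  have PB0: "PB \<noteq> 0" unfolding PB_def using B fin by auto
  have R: "poly ((\<Sum>K\<in>Pow Y. if card K = n then smult (W w z Y K) ((\<Prod>k\<in>K. [:- 1, w * z k:]) * (\<Prod>j\<in>Y - K. [:- 1, z j:])) else 0)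
      - smult \<alpha> (\<Prod>i\<in>Y. [:- 1, w * z i:]) - smult \<beta> (\<Prod>i\<in>Y. [:- 1, z i:])) b = 0"
    using lemmaE_poly[OF fin inj cY w0, of n] unfolding \<alpha>_def \<beta>_def by simp
  have l1: "\<And>A. (\<Prod>i\<in>A. - 1 + b * (w * z i)) = (\<Prod>i\<in>A. b * w * z i - 1)"
    by (intro prod.cong) (auto simp: algebra_simps)
  have l2: "\<And>A. (\<Prod>i\<in>A. - 1 + b * z i) = (\<Prod>i\<in>A. b * z i - 1)"
    by (intro prod.cong) (auto simp: algebra_simps)
  have E: "(\<Sum>K\<in>Pow Y. if card K = n then W w z Y K * ((\<Prod>k\<in>K. b * w * z k - 1) * (\<Prod>j\<in>Y - K. b * z j - 1)) else 0)
      = \<beta> * PB + \<alpha> * PA"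
    using R unfolding PA_def PB_def
    by (simp add: poly_sum poly_prod if_distrib[of "\<lambda>p. poly p _"] l1 l2 mult.assoc diff_eq_eq cong: if_cong)
  have tm: "(\<Prod>j\<in>Y - K. 1 / (b * w * z j - 1)) * (\<Prod>k\<in>K. 1 / (b * z k - 1)) * W w z Y K * (PA * PB)
      = W w z Y K * ((\<Prod>k\<in>K. b * w * z k - 1) * (\<Prod>j\<in>Y - K. b * z j - 1))" if "K \<in> Pow Y" for K
  proof -
    have KY: "K \<subseteq> Y" using that by auto
    have sA: "PA = (\<Prod>j\<in>Y - K. b * w * z j - 1) * (\<Prod>k\<in>K. b * w * z k - 1)"
      unfolding PA_def using prod.subset_diff[OF KY fin] .
    have sB: "PB = (\<Prod>j\<in>Y - K. b * z j - 1) * (\<Prod>k\<in>K. b * z k - 1)"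
      unfolding PB_def using prod.subset_diff[OF KY fin] .
    have n1: "(\<Prod>j\<in>Y - K. b * w * z j - 1) \<noteq> 0" using A fin by auto
    have fK: "finite K" using fin KY finite_subset by auto
    have n2: "(\<Prod>k\<in>K. b * z k - 1) \<noteq> 0" using B KY fK by (subst prod_zero_iff[OF fK]) auto
    show ?thesis unfolding sA sB using n1 n2 by (simp add: prod_dividef field_simps)
  qed
  have "(\<Sum>K\<in>Pow Y. if card K = n then (\<Prod>j\<in>Y - K. 1 / (b * w * z j - 1)) * (\<Prod>k\<in>K. 1 / (b * z k - 1)) * W w z Y K else 0) * (PA * PB)
      = \<beta> * PB + \<alpha> * PA"
    unfolding E[symmetric] sum_distrib_right by (rule sum.cong) (auto simp: tm)
  then show ?thesis unfolding \<alpha>_def[symmetric] \<beta>_def[symmetric] PA_def[symmetric] PB_def[symmetric]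
    using PA0 PB0 by (simp add: field_simps)
qed

theorem lemmaB4:
  fixes N m :: nat and \<omega> t :: complex and \<tau> :: int
    and Y :: "nat set" and z :: "nat \<Rightarrow> complex"
  assumes "N \<ge> 2" and "primitive_root_of_unity N \<omega>"
    and "m \<ge> 1" and "finite Y" and "card Y = m"
    and "inj_on z Y"
    and "\<And>K j. K \<subseteq> Y \<Longrightarrow> j \<in> Y - K \<Longrightarrow>
           t * z j * \<omega> powi (\<tau> + int (card K) + 1) - 1 \<noteq> 0"
    and "\<And>K k. K \<subseteq> Y \<Longrightarrow> k \<in> K \<Longrightarrow>
           t * z k * \<omega> powi (\<tau> + int (card K)) - 1 \<noteq> 0"
  shows "(\<Sum>(J, K) \<in> {(J, K). J \<subseteq> Y \<and> K \<subseteq> Y \<and> J \<inter> K = {} \<and> J \<union> K = Y}.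
            (let nD = card K; ks = sorted_list_of_set K in
              (-1) ^ nD
              * (\<Prod>j\<in>J. 1 / (t * z j * \<omega> powi (\<tau> + int nD + 1) - 1))
              * (\<Prod>q\<in>{1..nD}. \<omega> ^ (q - 1) / (t * z (ks ! (q - 1)) * \<omega> powi (\<tau> + int nD) - 1))
              * (\<Prod>j\<in>J. \<Prod>k\<in>K. (z k - z j * \<omega>) / (z k - z j)))) = 0"
proof -
  note asm = assms
  obtain m' where m: "m = Suc m'" using assms(3) by (cases m) auto
  have cY: "card Y = Suc m'" using assms(5) m by simp
  have w0: "\<omega> \<noteq> 0"
  proof
    assume "\<omega> = 0"
    moreover have "N \<noteq> 0" using assms(1) by simp
    ultimately show False using assms(2) unfolding primitive_root_of_unity_def by (simp add: power_0_left)
  qed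
  define e where "e n = \<tau> + int n" for n :: nat
  define u where "u n i = t * z i * \<omega> powi (e n) - 1" for n :: nat and i
  define Bp where "Bp n = (\<Prod>i\<in>Y. u n i)" for n
  define c where "c n = (-1::complex) ^ n * (\<Prod>q\<in>{1..n}. \<omega> ^ (q - 1))" for n
  define E where "E n = (\<Sum>K\<in>Pow Y. if card K = n then (\<Prod>j\<in>Y - K. 1 / u (Suc n) j) * (\<Prod>k\<in>K. 1 / u n k) * W \<omega> z Y K else 0)" for n
  define f where "f K = c (card K) * ((\<Prod>j\<in>Y - K. 1 / u (Suc (card K)) j) * (\<Prod>k\<in>K. 1 / u (card K) k) * W \<omega> z Y K)" for K
  define \<alpha> where "\<alpha> n = (if n = 0 then 0 else qb \<omega> m' (n - 1))" for n
  define \<beta> where "\<beta> n = \<omega> ^ n * qb \<omega> m' n" for n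
  have fin: "finite Y" and inj: "inj_on z Y" using assms by auto
  have seteq: "{(J, K). J \<subseteq> Y \<and> K \<subseteq> Y \<and> J \<inter> K = {} \<and> J \<union> K = Y} = (\<lambda>K. (Y - K, K)) ` Pow Y"
    by auto
  have injp: "inj_on (\<lambda>K. (Y - K, K)) (Pow Y)" by (auto simp: inj_on_def)
  have step1: "(\<Sum>(J, K) \<in> {(J, K). J \<subseteq> Y \<and> K \<subseteq> Y \<and> J \<inter> K = {} \<and> J \<union> K = Y}.
            (let nD = card K; ks = sorted_list_of_set K in
              (-1) ^ nD
              * (\<Prod>j\<in>J. 1 / (t * z j * \<omega> powi (\<tau> + int nD + 1) - 1))
              * (\<Prod>q\<in>{1..nD}. \<omega> ^ (q - 1) / (t * z (ks ! (q - 1)) * \<omega> powi (\<tau> + int nD) - 1))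
              * (\<Prod>j\<in>J. \<Prod>k\<in>K. (z k - z j * \<omega>) / (z k - z j)))) = (\<Sum>K\<in>Pow Y. f K)"
  proof (rule sum.reindex_cong[OF injp seteq])
    fix K assume "K \<in> Pow Y"
    then have fK: "finite K" using fin finite_subset by auto
    have q: "(\<Prod>q\<in>{1..card K}. \<omega> ^ (q - 1) / (t * z (sorted_list_of_set K ! (q - 1)) * \<omega> powi (\<tau> + int (card K)) - 1))
        = (\<Prod>q\<in>{1..card K}. \<omega> ^ (q - 1)) * (\<Prod>k\<in>K. 1 / u (card K) k)"
    proof -
      have "(\<Prod>q\<in>{1..card K}. \<omega> ^ (q - 1) / (t * z (sorted_list_of_set K ! (q - 1)) * \<omega> powi (\<tau> + int (card K)) - 1))
        = (\<Prod>q\<in>{1..card K}. \<omega> ^ (q - 1) * (\<lambda>k. 1 / u (card K) k) (sorted_list_of_set K ! (q - 1)))"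
        by (rule prod.cong) (auto simp: u_def e_def)
      also have "\<dots> = (\<Prod>q\<in>{1..card K}. \<omega> ^ (q - 1)) * (\<Prod>k\<in>K. 1 / u (card K) k)"
        by (simp only: prod.distrib prod_sorted[OF fK, of "\<lambda>k. 1 / u (card K) k"])
      finally show ?thesis .
    qed
    have j: "(\<Prod>j\<in>Y - K. 1 / (t * z j * \<omega> powi (\<tau> + int (card K) + 1) - 1)) = (\<Prod>j\<in>Y - K. 1 / u (Suc (card K)) j)"
      by (rule prod.cong) (auto simp: u_def e_def add.assoc add.commute[of 1])
    show "(case (Y - K, K) of (J, K) \<Rightarrow>
            (let nD = card K; ks = sorted_list_of_set K in
              (-1) ^ nD
              * (\<Prod>j\<in>J. 1 / (t * z j * \<omega> powi (\<tau> + int nD + 1) - 1))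
              * (\<Prod>q\<in>{1..nD}. \<omega> ^ (q - 1) / (t * z (ks ! (q - 1)) * \<omega> powi (\<tau> + int nD) - 1))
              * (\<Prod>j\<in>J. \<Prod>k\<in>K. (z k - z j * \<omega>) / (z k - z j)))) = f K"
      unfolding f_def c_def W_def Let_def prod.case q j by (simp add: ac_simps)
  qed
  have step2: "(\<Sum>K\<in>Pow Y. f K) = (\<Sum>n\<le>m. c n * E n)"
  proof -
    have "(\<Sum>n\<le>m. c n * E n) = (\<Sum>n\<le>m. \<Sum>K\<in>Pow Y. if card K = n then f K else 0)"
      unfolding E_def f_def sum_distrib_left by (intro sum.cong refl) auto
    also have "\<dots> = (\<Sum>K\<in>Pow Y. \<Sum>n\<le>m. if card K = n then f K else 0)" by (rule sum.swap)
    also have "\<dots> = (\<Sum>K\<in>Pow Y. f K)"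
    proof (rule sum.cong)
      fix K assume "K \<in> Pow Y"
      then have "card K \<le> m" using fin assms(5) card_mono by auto
      then show "(\<Sum>n\<le>m. if card K = n then f K else 0) = f K" by simp
    qed simp
    finally show ?thesis by simp
  qed
  have unz: "u n i \<noteq> 0" if "1 \<le> n" "n \<le> m" "i \<in> Y" for n i
  proof -
    have "n - 1 \<le> card (Y - {i})" using that fin assms(5) by simp
    then obtain K where K: "K \<subseteq> Y - {i}" "card K = n - 1" by (rule obtain_subset_with_card_n)
    have "t * z i * \<omega> powi (\<tau> + int (card K) + 1) - 1 \<noteq> 0"
      using assms(7)[of K i] K that by auto
    moreover have "\<tau> + int (card K) + 1 = e n" unfolding e_def K(2) using that by simp
    ultimately show ?thesis unfolding u_def by simp
  qed
  have Bnz: "Bp n \<noteq> 0" if "1 \<le> n" "n \<le> m" for n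
    unfolding Bp_def using unz[OF that] fin by auto
  have step3: "E n = \<alpha> n / Bp n + \<beta> n / Bp (Suc n)" if nm: "n \<le> m" for n
  proof -
    consider "n = 0" | "n = m" | "1 \<le> n" "n < m"
      by (cases "n = 0"; cases "n = m") (use nm in auto)
    then show ?thesis
    proof cases
      case 1
      have "E n = (\<Prod>j\<in>Y. 1 / u (Suc 0) j)"
      proof -
        have "E n = (\<Sum>K\<in>Pow Y. if K = {} then (\<Prod>j\<in>Y - K. 1 / u (Suc 0) j) * (\<Prod>k\<in>K. 1 / u 0 k) * W \<omega> z Y K else 0)"
          unfolding E_def 1 using fin by (intro sum.cong refl) (auto dest: finite_subset)
        also have "\<dots> = (\<Prod>j\<in>Y. 1 / u (Suc 0) j)" using fin by (simp add: W_def)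
        finally show ?thesis .
      qed
      then show ?thesis unfolding 1 \<alpha>_def \<beta>_def Bp_def by (simp add: prod_dividef)
    next
      case 2
      have "E n = (\<Prod>k\<in>Y. 1 / u m k)"
      proof -
        have "E n = (\<Sum>K\<in>Pow Y. if K = Y then (\<Prod>j\<in>Y - K. 1 / u (Suc m) j) * (\<Prod>k\<in>K. 1 / u m k) * W \<omega> z Y K else 0)"
          unfolding E_def 2 using fin assms(5) by (intro sum.cong refl) (auto dest: card_subset_eq)
        also have "\<dots> = (\<Prod>k\<in>Y. 1 / u m k)" using fin by (simp add: W_def)
        finally show ?thesis .
      qed
      then show ?thesis unfolding 2 \<alpha>_def \<beta>_def Bp_def using m by (simp add: prod_dividef qb_gt)
    next
      case 3
      define b where "b = t * \<omega> powi (e n)"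
      have u1: "u n i = b * z i - 1" for i unfolding u_def b_def by (simp add: ac_simps)
      have u2: "u (Suc n) i = b * \<omega> * z i - 1" for i
      proof -
        have "\<omega> powi (e (Suc n)) = \<omega> powi (e n) * \<omega>"
          unfolding e_def using w0 by (simp add: power_int_add add.assoc)
        then show ?thesis unfolding u_def b_def by (simp add: ac_simps)
      qed
      have A: "b * \<omega> * z i - 1 \<noteq> 0" if "i \<in> Y" for i
        using unz[of "Suc n" i] 3 that unfolding u2 by simp
      have B: "b * z i - 1 \<noteq> 0" if "i \<in> Y" for i
        using unz[of n i] 3 that unfolding u1 by simp
      show ?thesis
        using lemmaE_div[OF fin inj cY w0 A B, of n]
        unfolding E_def \<alpha>_def \<beta>_def Bp_def u1 u2 by simp
    qed
  qed
  define g where "g n = c n * \<alpha> n / Bp n" for n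
  have cS: "c (Suc n) = - (c n * \<omega> ^ n)" for n
    unfolding c_def by (simp add: prod.cl_ivl_Suc)
  have tel: "c n * E n = g n - g (Suc n)" if "n \<le> m" for n
  proof -
    have "c n * E n = c n * \<alpha> n / Bp n + c n * \<beta> n / Bp (Suc n)"
      unfolding step3[OF that] by (simp only: distrib_left times_divide_eq_right)
    also have "c n * \<beta> n = - (c (Suc n) * \<alpha> (Suc n))"
      unfolding cS \<alpha>_def \<beta>_def by simp
    finally show ?thesis by (simp only: g_def diff_conv_add_uminus minus_divide_left)
  qed
  have "(\<Sum>n\<le>m. c n * E n) = (\<Sum>n\<le>m. g n - g (Suc n))" by (rule sum.cong) (auto simp: tel)
  also have "\<dots> = g 0 - g (Suc m)" by (rule sum_telescope)
  also have "\<dots> = 0" unfolding g_def \<alpha>_def using m by (simp add: qb_gt)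
  finally show ?thesis using step1 step2 by simp
qed

end
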